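(* Fix $\delta\in(0,1]$. If a random variable $\xi\ge0$ has a heavy-tailed distribution, then there exists a function $h:\mathbf R^+\to\mathbf R^+$ such that: (i) $h$ is subadditive, i.e. $h(x)\le h(y)+h(x-y)$ for all $0\le y\le x$; (ii) $h(x)=o(x)$ as $x\to\infty$; (iii) $\mathbf E e^{h(\xi)}\le 1+\delta$; (iv) $\mathbf E\,\xi e^{h(\xi)}=\infty$.
   Context: A distribution $F$ on $[0,\infty)$ is heavy-tailed if $\int_0^\infty e^{\gamma x}F(dx)=\infty$ for every $\gamma>0$. *)

theory Defs
  imports "HOL-Probability.Probability" "HOL-Library.Landau_Symbols"
begin

definition heavy_tailed :: "real measure \<Rightarrow> bool" where
  "heavy_tailed F \<longleftrightarrow> (\<forall>\<gamma>::real. \<gamma> > 0 \<longrightarrow> (\<integral>\<^sup>+ x. ennreal (exp (\<gamma> * x)) \<partial>F) = \<infinity>)"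

end

theory Submission
  imports Defs
begin

lemma exp_diff_bound:
  fixes A B :: real
  shows "\<bar>exp A - exp B\<bar> \<le> exp (max A B) * \<bar>A - B\<bar>"
proof (cases "A \<le> B")
  case True
  have "1 + (A - B) \<le> exp (A - B)" by (rule exp_ge_add_one_self)
  then have "exp B * (1 + (A - B)) \<le> exp B * exp (A - B)" by simp
  also have "\<dots> = exp A" by (simp add: exp_diff)
  finally show ?thesis using True by (simp add: algebra_simps max_def)
next
  case False
  have "1 + (B - A) \<le> exp (B - A)" by (rule exp_ge_add_one_self)
  then have "exp A * (1 + (B - A)) \<le> exp A * exp (B - A)" by simp
  also have "\<dots> = exp B" by (simp add: exp_diff)
  finally show ?thesis using False by (simp add: algebra_simps max_def)
qed

locale htail = prob_space M for M :: "'a measure" +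
  fixes Z :: "'a \<Rightarrow> real"
  assumes Zm[measurable]: "Z \<in> borel_measurable M"
    and Zpos: "\<And>\<omega>. Z \<omega> \<ge> 0"
    and HT: "\<And>\<gamma>. \<gamma> > 0 \<Longrightarrow> (\<integral>\<^sup>+\<omega>. ennreal (exp (\<gamma> * Z \<omega>)) \<partial>M) = \<infinity>"
begin

definition fT :: "real \<Rightarrow> real \<Rightarrow> real \<Rightarrow> real \<Rightarrow> 'a \<Rightarrow> real" where
  "fT \<gamma> s v t \<omega> = (if s < Z \<omega> then exp (v + \<gamma> * (min (Z \<omega>) t - s)) - exp v else 0)"

definition Tf :: "real \<Rightarrow> real \<Rightarrow> real \<Rightarrow> real \<Rightarrow> real" where
  "Tf \<gamma> s v t = (\<integral>\<omega>. fT \<gamma> s v t \<omega> \<partial>M)"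

lemma fT_meas[measurable]: "fT \<gamma> s v t \<in> borel_measurable M"
  unfolding fT_def by measurable

lemma fT_nonneg: "\<gamma> \<ge> 0 \<Longrightarrow> s \<le> t \<Longrightarrow> fT \<gamma> s v t \<omega> \<ge> 0"
  unfolding fT_def by (auto intro!: mult_nonneg_nonneg)

lemma fT_le: "\<gamma> \<ge> 0 \<Longrightarrow> s \<le> t \<Longrightarrow> fT \<gamma> s v t \<omega> \<le> exp (v + \<gamma> * (t - s))"
proof -
  assume a: "\<gamma> \<ge> 0" "s \<le> t"
  have e: "exp (v + \<gamma> * (min (Z \<omega>) t - s)) \<le> exp (v + \<gamma> * (t - s))"
    using a by (auto intro!: mult_left_mono)
  show ?thesis
  proof (cases "s < Z \<omega>")
    case True
    then have "fT \<gamma> s v t \<omega> = exp (v + \<gamma> * (min (Z \<omega>) t - s)) - exp v" by (simp add: fT_def)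
    moreover have "exp v > 0" by simp
    ultimately show ?thesis using e by linarith
  qed (simp add: fT_def)
qed

lemma fT_int: "\<gamma> \<ge> 0 \<Longrightarrow> s \<le> t \<Longrightarrow> integrable M (fT \<gamma> s v t)"
  by (rule integrable_const_bound[where B="exp (v + \<gamma> * (t - s))"])
     (auto simp: fT_nonneg fT_le)

lemma fT_lip:
  assumes "\<gamma> \<ge> 0" "s \<le> t" "t \<le> b" "s \<le> t'" "t' \<le> b"
  shows "\<bar>fT \<gamma> s v t \<omega> - fT \<gamma> s v t' \<omega>\<bar> \<le> \<gamma> * exp (v + \<gamma> * (b - s)) * \<bar>t - t'\<bar>"
proof (cases "s < Z \<omega>")
  case True
  define A where "A = v + \<gamma> * (min (Z \<omega>) t - s)"
  define B where "B = v + \<gamma> * (min (Z \<omega>) t' - s)"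
  define E where "E = v + \<gamma> * (b - s)"
  have 1: "\<bar>fT \<gamma> s v t \<omega> - fT \<gamma> s v t' \<omega>\<bar> = \<bar>exp A - exp B\<bar>"
    using True by (simp add: fT_def A_def B_def)
  have 2: "\<bar>exp A - exp B\<bar> \<le> exp (max A B) * \<bar>A - B\<bar>" by (rule exp_diff_bound)
  have mt: "min (Z \<omega>) t \<le> b" "min (Z \<omega>) t' \<le> b" using assms by auto
  have "A \<le> E" unfolding A_def E_def
    using assms mt by (intro add_left_mono mult_left_mono) auto
  moreover have "B \<le> E" unfolding B_def E_def
    using assms mt by (intro add_left_mono mult_left_mono) auto
  ultimately have 3: "exp (max A B) \<le> exp E" by (metis exp_le_cancel_iff max.bounded_iff)
  have "A - B = \<gamma> * (min (Z \<omega>) t - min (Z \<omega>) t')"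
    unfolding A_def B_def by (simp add: right_diff_distrib)
  then have "\<bar>A - B\<bar> = \<gamma> * \<bar>min (Z \<omega>) t - min (Z \<omega>) t'\<bar>"
    using assms by (simp add: abs_mult)
  moreover have "\<bar>min (Z \<omega>) t - min (Z \<omega>) t'\<bar> \<le> \<bar>t - t'\<bar>" by (auto simp: min_def)
  ultimately have 4: "\<bar>A - B\<bar> \<le> \<gamma> * \<bar>t - t'\<bar>"
    using assms by (metis mult_left_mono)
  have "exp (max A B) * \<bar>A - B\<bar> \<le> exp E * (\<gamma> * \<bar>t - t'\<bar>)"
    by (rule mult_mono[OF 3 4]) auto
  then show ?thesis using 1 2 unfolding E_def by (simp add: mult_ac)
next
  case False
  then show ?thesis using assms by (simp add: fT_def)
qed

lemma Tf_cont:
  assumes "\<gamma> \<ge> 0" "s \<le> b"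
  shows "continuous_on {s..b} (Tf \<gamma> s v)"
proof -
  let ?C = "\<gamma> * exp (v + \<gamma> * (b - s))"
  have "?C-lipschitz_on {s..b} (Tf \<gamma> s v)"
  proof (rule lipschitz_onI)
    fix t t' assume t: "t \<in> {s..b}" "t' \<in> {s..b}"
    have "dist (Tf \<gamma> s v t) (Tf \<gamma> s v t') = \<bar>\<integral>\<omega>. fT \<gamma> s v t \<omega> - fT \<gamma> s v t' \<omega> \<partial>M\<bar>"
      unfolding Tf_def dist_real_def
      using t assms by (subst Bochner_Integration.integral_diff) (auto intro!: fT_int)
    also have "\<dots> \<le> (\<integral>\<omega>. \<bar>fT \<gamma> s v t \<omega> - fT \<gamma> s v t' \<omega>\<bar> \<partial>M)"
      by (rule integral_abs_bound)
    also have "\<dots> \<le> (\<integral>\<omega>. ?C * \<bar>t - t'\<bar> \<partial>M)"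
      using t assms
      by (intro integral_mono fT_lip) (auto intro!: integrable_abs integrable_diff fT_int)
    also have "\<dots> = ?C * dist t t'" by (simp add: dist_real_def prob_space)
    finally show "dist (Tf \<gamma> s v t) (Tf \<gamma> s v t') \<le> ?C * dist t t'" .
  qed (use assms in auto)
  then show ?thesis by (rule lipschitz_on_continuous_on)
qed

lemma Tf_start: "Tf \<gamma> s v s = 0"
proof -
  have "fT \<gamma> s v s = (\<lambda>_. 0)" by (auto simp: fT_def min_def fun_eq_iff)
  then show ?thesis by (simp add: Tf_def)
qed

lemma Tf_unbounded:
  assumes g: "\<gamma> > 0"
  shows "\<exists>t\<ge>s. Tf \<gamma> s v t \<ge> c"
proof (rule ccontr)
  assume "\<not> ?thesis"
  then have lt: "\<And>t. t \<ge> s \<Longrightarrow> Tf \<gamma> s v t < c" by force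
  define F where "F \<omega> = (if s < Z \<omega> then exp (v + \<gamma> * (Z \<omega> - s)) - exp v else 0)" for \<omega>
  have F_meas[measurable]: "F \<in> borel_measurable M" unfolding F_def by measurable
  have F_nn: "F \<omega> \<ge> 0" for \<omega> using g by (auto simp: F_def)
  have fT_mono: "fT \<gamma> s v t \<omega> \<le> fT \<gamma> s v t' \<omega>" if "t \<le> t'" for t t' \<omega>
    using that g by (auto simp: fT_def intro!: mult_left_mono)
  have fT_leF: "fT \<gamma> s v t \<omega> \<le> F \<omega>" for t \<omega>
    using g by (auto simp: fT_def F_def intro!: mult_left_mono)
  have sup: "(SUP n::nat. ennreal (fT \<gamma> s v (s + real n) \<omega>)) = ennreal (F \<omega>)" for \<omega>
  proof (rule antisym)
    show "(SUP n::nat. ennreal (fT \<gamma> s v (s + real n) \<omega>)) \<le> ennreal (F \<omega>)"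
      by (rule SUP_least) (rule ennreal_leI, rule fT_leF)
    obtain n :: nat where n: "Z \<omega> - s \<le> real n" using real_arch_simple by blast
    then have "fT \<gamma> s v (s + real n) \<omega> = F \<omega>" by (simp add: fT_def F_def min_def)
    then show "ennreal (F \<omega>) \<le> (SUP n::nat. ennreal (fT \<gamma> s v (s + real n) \<omega>))"
      by (intro SUP_upper2[of n]) auto
  qed
  have "(\<integral>\<^sup>+\<omega>. ennreal (F \<omega>) \<partial>M) = (\<integral>\<^sup>+\<omega>. (SUP n::nat. ennreal (fT \<gamma> s v (s + real n) \<omega>)) \<partial>M)"
    by (simp add: sup)
  also have "\<dots> = (SUP n::nat. \<integral>\<^sup>+\<omega>. ennreal (fT \<gamma> s v (s + real n) \<omega>) \<partial>M)"
    by (rule nn_integral_monotone_convergence_SUP)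
       (auto simp: incseq_def le_fun_def intro!: ennreal_leI fT_mono)
  also have "\<dots> = (SUP n::nat. ennreal (Tf \<gamma> s v (s + real n)))"
    unfolding Tf_def using g
    by (intro SUP_cong refl nn_integral_eq_integral fT_int AE_I2 fT_nonneg) auto
  also have "\<dots> \<le> ennreal c"
    by (rule SUP_least, rule ennreal_leI, rule less_imp_le, rule lt) simp
  finally have Fc: "(\<integral>\<^sup>+\<omega>. ennreal (F \<omega>) \<partial>M) \<le> ennreal c" .
  have pt: "ennreal (exp (\<gamma> * Z \<omega>)) \<le> ennreal (exp (\<gamma> * s)) + ennreal (exp (\<gamma> * s - v)) * (ennreal (F \<omega>) + ennreal (exp v))" for \<omega>
  proof -
    have "exp (\<gamma> * Z \<omega>) \<le> exp (\<gamma> * s) + exp (\<gamma> * s - v) * (F \<omega> + exp v)"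
    proof (cases "s < Z \<omega>")
      case True
      have "F \<omega> + exp v = exp (v + \<gamma> * (Z \<omega> - s))" using True by (simp add: F_def)
      then have "exp (\<gamma> * s - v) * (F \<omega> + exp v) = exp (\<gamma> * s - v + (v + \<gamma> * (Z \<omega> - s)))"
        by (simp only: exp_add)
      also have "\<dots> = exp (\<gamma> * Z \<omega>)" by (simp add: algebra_simps)
      finally show ?thesis by simp
    next
      case False
      then have "exp (\<gamma> * Z \<omega>) \<le> exp (\<gamma> * s)" using g by simp
      moreover have "0 \<le> exp (\<gamma> * s - v) * (F \<omega> + exp v)" using F_nn[of \<omega>] by simp
      ultimately show ?thesis by linarith
    qed
    then have "ennreal (exp (\<gamma> * Z \<omega>)) \<le> ennreal (exp (\<gamma> * s) + exp (\<gamma> * s - v) * (F \<omega> + exp v))"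
      by (rule ennreal_leI)
    also have "\<dots> = ennreal (exp (\<gamma> * s)) + ennreal (exp (\<gamma> * s - v)) * (ennreal (F \<omega>) + ennreal (exp v))"
      using F_nn[of \<omega>] by (simp add: ennreal_mult)
    finally show ?thesis .
  qed
  have "(\<integral>\<^sup>+\<omega>. ennreal (exp (\<gamma> * Z \<omega>)) \<partial>M) \<le> (\<integral>\<^sup>+\<omega>. ennreal (exp (\<gamma> * s)) + ennreal (exp (\<gamma> * s - v)) * (ennreal (F \<omega>) + ennreal (exp v)) \<partial>M)"
    by (intro nn_integral_mono pt)
  also have "\<dots> = ennreal (exp (\<gamma> * s)) + ennreal (exp (\<gamma> * s - v)) * ((\<integral>\<^sup>+\<omega>. ennreal (F \<omega>) \<partial>M) + ennreal (exp v))"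
    by (simp add: nn_integral_add nn_integral_cmult emeasure_space_1)
  also have "\<dots> \<le> ennreal (exp (\<gamma> * s)) + ennreal (exp (\<gamma> * s - v)) * (ennreal c + ennreal (exp v))"
    using Fc by (intro add_mono mult_left_mono) auto
  also have "\<dots> < \<infinity>" by (simp add: ennreal_mult_less_top)
  finally have fin: "(\<integral>\<^sup>+\<omega>. ennreal (exp (\<gamma> * Z \<omega>)) \<partial>M) < \<infinity>" .
  from fin show False unfolding HT[OF g] by simp
qed

lemma Tf_hit:
  assumes g: "\<gamma> > 0" and c: "c \<ge> 0"
  shows "\<exists>t\<ge>s. Tf \<gamma> s v t = c"
proof -
  obtain b where b: "b \<ge> s" "Tf \<gamma> s v b \<ge> c" using Tf_unbounded[OF g] by blast
  have "\<exists>t\<ge>s. t \<le> b \<and> Tf \<gamma> s v t = c"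
    by (rule IVT') (use b c g Tf_cont[of \<gamma> s b v] in \<open>auto simp: Tf_start\<close>)
  then show ?thesis by blast
qed

end

locale htail_d = htail M Z for M :: "'a measure" and Z +
  fixes \<delta> :: real
  assumes dpos: "\<delta> > 0"
begin

definition gam :: "nat \<Rightarrow> real" where "gam k = \<delta> / 2 ^ Suc k"

lemma gam_pos: "gam k > 0" using dpos by (simp add: gam_def)

lemma gam_anti: "j \<le> k \<Longrightarrow> gam k \<le> gam j"
  using dpos by (auto simp: gam_def intro!: divide_left_mono power_increasing)

lemma gam_sum: "(\<Sum>k<K. gam k) = \<delta> - \<delta> / 2 ^ K"
  by (induction K) (auto simp: gam_def field_simps)

primrec sq :: "nat \<Rightarrow> real \<times> real" where
  "sq 0 = (0, 0)"
| "sq (Suc k) = (let t = (SOME t. t \<ge> fst (sq k) \<and> Tf (gam k) (fst (sq k)) (snd (sq k)) t = gam k)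
                 in (t, snd (sq k) + gam k * (t - fst (sq k))))"

definition S where "S k = fst (sq k)"
definition V where "V k = snd (sq k)"

lemma S0: "S 0 = 0" and V0: "V 0 = 0" by (simp_all add: S_def V_def)

lemma step: "S k \<le> S (Suc k)" "Tf (gam k) (S k) (V k) (S (Suc k)) = gam k"
  "V (Suc k) = V k + gam k * (S (Suc k) - S k)"
proof -
  let ?P = "\<lambda>t. t \<ge> S k \<and> Tf (gam k) (S k) (V k) t = gam k"
  have ex: "\<exists>t. ?P t" using Tf_hit[OF gam_pos, of "gam k"] gam_pos[of k] by auto
  have e: "S (Suc k) = (SOME t. ?P t)" "V (Suc k) = V k + gam k * ((SOME t. ?P t) - S k)"
    by (simp_all add: S_def V_def Let_def)
  have "?P (SOME t. ?P t)" by (rule someI_ex[OF ex])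
  then show "S k \<le> S (Suc k)" "Tf (gam k) (S k) (V k) (S (Suc k)) = gam k"
    "V (Suc k) = V k + gam k * (S (Suc k) - S k)" using e by simp_all
qed

lemma S_mono: "incseq S"
  by (rule incseq_SucI) (rule step(1))

lemma S_nonneg: "S k \<ge> 0"
  using S_mono S0 by (metis incseq_def le0)

definition L :: "nat \<Rightarrow> real \<Rightarrow> real" where "L k x = V k + gam k * (x - S k)"

lemma V_ge: "gam k * S k \<le> V k"
proof (induction k)
  case 0 then show ?case by (simp add: S0 V0)
next
  case (Suc k)
  have "gam (Suc k) * S (Suc k) \<le> gam k * S (Suc k)"
    using gam_anti[of k "Suc k"] S_nonneg[of "Suc k"] by (intro mult_right_mono) auto
  also have "\<dots> = gam k * S k + gam k * (S (Suc k) - S k)" by (simp add: algebra_simps)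
  also have "\<dots> \<le> V (Suc k)" using Suc step(3)[of k] by simp
  finally show ?case .
qed

lemma L_alt: "L k x = (V k - gam k * S k) + gam k * x"
  by (simp add: L_def algebra_simps)

lemma L_nonneg: "x \<ge> 0 \<Longrightarrow> L k x \<ge> 0"
proof -
  assume x: "x \<ge> 0"
  have "gam k * x \<ge> 0" using x gam_pos[of k] by simp
  then show ?thesis using V_ge[of k] L_alt[of k x] by linarith
qed

lemma L_rel: "L (Suc j) x - L j x = (gam j - gam (Suc j)) * (S (Suc j) - x)"
  by (simp add: L_def step(3) algebra_simps)

lemma L_min:
  assumes x: "S k \<le> x" "x \<le> S (Suc k)"
  shows "L k x \<le> L j x"
proof (cases "k \<le> j")
  case True
  then show ?thesis
  proof (induction j rule: dec_induct)
    case base then show ?case by simp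
  next
    case (step n)
    have "S (Suc k) \<le> S (Suc n)" using S_mono step.hyps(1) by (simp add: incseq_def)
    then have "0 \<le> (gam n - gam (Suc n)) * (S (Suc n) - x)"
      using x gam_anti[of n "Suc n"] by (intro mult_nonneg_nonneg) auto
    then show ?case using L_rel[of n x] step.IH by linarith
  qed
next
  case False
  then have "j \<le> k" by simp
  then show ?thesis
  proof (induction j rule: inc_induct)
    case base then show ?case by simp
  next
    case (step n)
    have "S (Suc n) \<le> S k" using S_mono step.hyps(2) by (simp add: incseq_def)
    then have "(gam n - gam (Suc n)) * (S (Suc n) - x) \<le> 0"
      using x gam_anti[of n "Suc n"] by (intro mult_nonneg_nonpos) auto
    then show ?case using L_rel[of n x] step.IH by linarith
  qed
qed

definition g :: "real \<Rightarrow> real" where "g x = (if x < 0 then 0 else (INF k. L k x))"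

lemma bdd: "x \<ge> 0 \<Longrightarrow> bdd_below (range (\<lambda>k. L k x))"
  by (rule bdd_belowI[of _ 0]) (auto intro: L_nonneg)

lemma g_le: "x \<ge> 0 \<Longrightarrow> g x \<le> L k x"
  unfolding g_def by (auto intro!: cINF_lower bdd)

lemma g_nonneg: "g x \<ge> 0"
  unfolding g_def by (auto intro!: cINF_greatest L_nonneg)

lemma g_eq: "S k \<le> x \<Longrightarrow> x \<le> S (Suc k) \<Longrightarrow> g x = L k x"
proof -
  assume x: "S k \<le> x" "x \<le> S (Suc k)"
  then have x0: "x \<ge> 0" using S_nonneg[of k] by linarith
  have "L k x \<le> g x" using x x0 unfolding g_def by (auto intro!: cINF_greatest L_min)
  then show ?thesis using g_le[OF x0, of k] by linarith
qed

lemma g0: "g 0 = 0"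
  using g_eq[of 0 0] step(1)[of 0] by (simp add: S0 V0 L_def)

lemma gS: "g (S k) = V k"
  using g_eq[of k "S k"] step(1)[of k] by (simp add: L_def)

lemma g_mono: "mono g"
proof (rule monoI)
  fix x y :: real assume xy: "x \<le> y"
  show "g x \<le> g y"
  proof (cases "x < 0")
    case True then show ?thesis using g_nonneg[of y] by (simp add: g_def)
  next
    case False
    have "g x \<le> L k y" for k
    proof -
      have "gam k * x \<le> gam k * y" using xy gam_pos[of k] by simp
      then have "L k x \<le> L k y" by (simp add: L_def algebra_simps)
      then show ?thesis using g_le[of x k] False by linarith
    qed
    then show ?thesis using False xy unfolding g_def[of y] by (auto intro!: cINF_greatest)
  qed
qed

lemma g_meas[measurable]: "g \<in> borel_measurable borel"
  by (rule borel_measurable_mono[OF g_mono])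

lemma g_monoD: "x \<le> y \<Longrightarrow> g x \<le> g y"
  using g_mono by (simp add: mono_def)

lemma g_sub:
  assumes y: "0 \<le> y" "y \<le> x"
  shows "g x \<le> g y + g (x - y)"
proof -
  have key: "g x \<le> L i y + L j (x - y)" for i j
  proof (cases "i \<le> j")
    case True
    have "gam j * y \<le> gam i * y" using gam_anti[OF True] y by (intro mult_right_mono) auto
    moreover have "g x \<le> L j x" using g_le y by simp
    moreover have "gam j * (x - y) = gam j * x - gam j * y" by (simp add: right_diff_distrib)
    ultimately show ?thesis
      using L_alt[of j x] L_alt[of i y] L_alt[of j "x - y"] V_ge[of i] by linarith
  next
    case False
    then have ji: "j \<le> i" by simp
    have "gam i * (x - y) \<le> gam j * (x - y)" using gam_anti[OF ji] y by (intro mult_right_mono) auto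
    moreover have "g x \<le> L i x" using g_le y by simp
    moreover have "gam i * (x - y) = gam i * x - gam i * y" by (simp add: right_diff_distrib)
    ultimately show ?thesis
      using L_alt[of i x] L_alt[of i y] L_alt[of j "x - y"] V_ge[of j] by linarith
  qed
  have A: "g x - L j (x - y) \<le> g y" for j
  proof -
    have "g x - L j (x - y) \<le> L i y" for i using key[of i j] by linarith
    then show ?thesis using y unfolding g_def[of y] by (auto intro!: cINF_greatest)
  qed
  have "g x - g y \<le> L j (x - y)" for j using A[of j] by linarith
  then have "g x - g y \<le> g (x - y)" using y unfolding g_def[of "x - y"] by (auto intro!: cINF_greatest)
  then show ?thesis by linarith
qed

end


context htail_d
begin

lemma gam_small: "c > 0 \<Longrightarrow> \<exists>k. gam k < c"
proof -
  assume c: "c > 0"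
  obtain k :: nat where k: "\<delta> / c < real k" using reals_Archimedean2 by blast
  have "Suc k < 2 ^ Suc k" by (rule less_exp)
  then have p: "real (Suc k) \<le> 2 ^ Suc k"
    by (metis less_imp_le of_nat_le_iff of_nat_numeral of_nat_power)
  have "gam k \<le> \<delta> / real (Suc k)" unfolding gam_def
    using dpos p by (intro divide_left_mono) auto
  also have "\<dots> < c" using k c dpos by (simp add: field_simps)
  finally show ?thesis by blast
qed

lemma g_o: "g \<in> o[at_top](\<lambda>x. x)"
proof (rule landau_o.smallI)
  fix c :: real assume c: "c > 0"
  obtain k where k: "gam k < c / 2" using gam_small[of "c/2"] c by auto
  define a where "a = V k - gam k * S k"
  have a: "a \<ge> 0" using V_ge[of k] by (simp add: a_def)
  have "\<forall>x\<ge>max 1 (2 * a / c). norm (g x) \<le> c * norm x"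
  proof (intro allI impI)
    fix x assume x: "max 1 (2 * a / c) \<le> x"
    then have x0: "x \<ge> 1" by simp
    have "2 * a / c \<le> x" using x by simp
    then have ax: "a \<le> c / 2 * x" using c by (simp add: field_simps)
    have "gam k * x \<le> c / 2 * x" using k x0 by (intro mult_right_mono) auto
    then have "g x \<le> c * x" using g_le[of x k] L_alt[of k x] ax x0 a_def by linarith
    then show "norm (g x) \<le> c * norm x" using g_nonneg[of x] x0 by simp
  qed
  then show "eventually (\<lambda>x. norm (g x) \<le> c * norm x) at_top"
    unfolding eventually_at_top_linorder by blast
qed

definition Mk :: "nat \<Rightarrow> 'a \<Rightarrow> real" where "Mk K \<omega> = min (Z \<omega>) (S K)"

lemma Mk_meas[measurable]: "Mk K \<in> borel_measurable M"
  unfolding Mk_def by measurable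

lemma Mk0: "Mk 0 \<omega> = 0" using Zpos[of \<omega>] by (simp add: Mk_def S0)

lemma Mk_nonneg: "Mk K \<omega> \<ge> 0" using Zpos[of \<omega>] S_nonneg[of K] by (simp add: Mk_def)

lemma Mk_le_S: "Mk K \<omega> \<le> S K" by (simp add: Mk_def)

lemma Mk_le_Z: "Mk K \<omega> \<le> Z \<omega>" by (simp add: Mk_def)

lemma Mk_mono: "K \<le> K' \<Longrightarrow> Mk K \<omega> \<le> Mk K' \<omega>"
  unfolding Mk_def by (intro min.mono order_refl) (use S_mono in \<open>auto simp: incseq_def\<close>)

definition D :: "nat \<Rightarrow> 'a \<Rightarrow> real" where "D k = fT (gam k) (S k) (V k) (S (Suc k))"

lemma D_int: "integrable M (D k)"
  unfolding D_def using gam_pos[of k] step(1)[of k] by (intro fT_int) auto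

lemma D_integral: "(\<integral>\<omega>. D k \<omega> \<partial>M) = gam k"
  using step(2)[of k] by (simp add: D_def Tf_def)

lemma tele: "exp (g (Mk (Suc k) \<omega>)) - exp (g (Mk k \<omega>)) = D k \<omega>"
proof (cases "S k < Z \<omega>")
  case True
  have m1: "Mk k \<omega> = S k" using True by (simp add: Mk_def)
  have r: "S k \<le> Mk (Suc k) \<omega>" "Mk (Suc k) \<omega> \<le> S (Suc k)"
    using True step(1)[of k] by (auto simp: Mk_def)
  have "g (Mk (Suc k) \<omega>) = V k + gam k * (min (Z \<omega>) (S (Suc k)) - S k)"
    using g_eq[OF r] by (simp add: L_def Mk_def)
  then show ?thesis using True m1 gS[of k] by (simp add: D_def fT_def)
next
  case False
  then have "Mk k \<omega> = Z \<omega>" "Mk (Suc k) \<omega> = Z \<omega>" using step(1)[of k] by (auto simp: Mk_def)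
  then show ?thesis using False by (simp add: D_def fT_def)
qed

lemma exp_sum: "exp (g (Mk K \<omega>)) = 1 + (\<Sum>k<K. D k \<omega>)"
proof (induction K)
  case 0 then show ?case by (simp add: Mk0 g0)
next
  case (Suc K)
  then show ?case using tele[of K \<omega>] by simp
qed

lemma expg_bound: "\<bar>exp (g (Mk K \<omega>))\<bar> \<le> exp (g (S K))"
  using g_monoD[OF Mk_le_S[of K \<omega>]] by simp

lemma expg_int: "integrable M (\<lambda>\<omega>. exp (g (Mk K \<omega>)))"
  by (rule integrable_const_bound[where B="exp (g (S K))"]) (auto intro!: AE_I2 g_monoD Mk_le_S)

lemma exp_integral: "(\<integral>\<omega>. exp (g (Mk K \<omega>)) \<partial>M) = 1 + (\<Sum>k<K. gam k)"
proof -
  have "(\<integral>\<omega>. exp (g (Mk K \<omega>)) \<partial>M) = (\<integral>\<omega>. 1 + (\<Sum>k<K. D k \<omega>) \<partial>M)"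
    by (simp add: exp_sum)
  also have "\<dots> = (\<integral>\<omega>. 1 \<partial>M) + (\<integral>\<omega>. (\<Sum>k<K. D k \<omega>) \<partial>M)"
    by (rule Bochner_Integration.integral_add) (auto intro!: integrable_sum D_int)
  also have "(\<integral>\<omega>. (\<Sum>k<K. D k \<omega>) \<partial>M) = (\<Sum>k<K. (\<integral>\<omega>. D k \<omega> \<partial>M))"
    by (rule Bochner_Integration.integral_sum) (auto intro: D_int)
  finally show ?thesis by (simp add: D_integral prob_space)
qed

lemma D_le: "D k \<omega> \<le> gam k * (Mk (Suc k) \<omega> - Mk k \<omega>) * exp (g (Mk (Suc k) \<omega>))"
proof (cases "S k < Z \<omega>")
  case True
  have m1: "Mk k \<omega> = S k" using True by (simp add: Mk_def)
  have r: "S k \<le> Mk (Suc k) \<omega>" "Mk (Suc k) \<omega> \<le> S (Suc k)"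
    using True step(1)[of k] by (auto simp: Mk_def)
  define A where "A = g (Mk (Suc k) \<omega>)"
  have A: "A = V k + gam k * (Mk (Suc k) \<omega> - S k)"
    using g_eq[OF r] by (simp add: L_def A_def)
  have AV: "V k \<le> A" using A r gam_pos[of k] by simp
  have "D k \<omega> = exp A - exp (V k)"
    using True A by (simp add: D_def fT_def Mk_def)
  also have "\<dots> \<le> \<bar>exp A - exp (V k)\<bar>" by simp
  also have "\<dots> \<le> exp (max A (V k)) * \<bar>A - V k\<bar>" by (rule exp_diff_bound)
  also have "\<dots> = exp A * (gam k * (Mk (Suc k) \<omega> - Mk k \<omega>))"
  proof -
    have "max A (V k) = A" using AV by simp
    moreover have "\<bar>A - V k\<bar> = gam k * (Mk (Suc k) \<omega> - Mk k \<omega>)" using AV A m1 by simp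
    ultimately show ?thesis by simp
  qed
  finally show ?thesis by (simp add: A_def mult_ac)
next
  case False
  then have "Mk k \<omega> = Z \<omega>" "Mk (Suc k) \<omega> = Z \<omega>" using step(1)[of k] by (auto simp: Mk_def)
  then show ?thesis using False by (simp add: D_def fT_def)
qed

lemma diff_int:
  assumes "i \<le> j"
  shows "integrable M (\<lambda>\<omega>. (Mk j \<omega> - Mk i \<omega>) * exp (g (Mk K \<omega>)))"
proof (rule integrable_const_bound[where B="S j * exp (g (S K))"])
  show "AE \<omega> in M. norm ((Mk j \<omega> - Mk i \<omega>) * exp (g (Mk K \<omega>))) \<le> S j * exp (g (S K))"
  proof (rule AE_I2)
    fix \<omega>
    have "0 \<le> Mk j \<omega> - Mk i \<omega>" "Mk j \<omega> - Mk i \<omega> \<le> S j"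
      using Mk_mono[OF assms, of \<omega>] Mk_nonneg[of i \<omega>] Mk_le_S[of j \<omega>] by auto
    moreover have "exp (g (Mk K \<omega>)) \<le> exp (g (S K))" using expg_bound[of K \<omega>] by simp
    ultimately show "norm ((Mk j \<omega> - Mk i \<omega>) * exp (g (Mk K \<omega>))) \<le> S j * exp (g (S K))"
      by (simp add: abs_mult mult_mono)
  qed
qed simp

lemma one_le:
  assumes "k < K"
  shows "1 \<le> (\<integral>\<omega>. (Mk (Suc k) \<omega> - Mk k \<omega>) * exp (g (Mk K \<omega>)) \<partial>M)"
proof -
  have pt: "D k \<omega> \<le> gam k * ((Mk (Suc k) \<omega> - Mk k \<omega>) * exp (g (Mk K \<omega>)))" for \<omega>
  proof -
    have "exp (g (Mk (Suc k) \<omega>)) \<le> exp (g (Mk K \<omega>))"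
      using g_monoD[OF Mk_mono[of "Suc k" K \<omega>]] assms by simp
    moreover have "0 \<le> gam k * (Mk (Suc k) \<omega> - Mk k \<omega>)"
      using gam_pos[of k] Mk_mono[of k "Suc k" \<omega>] by simp
    ultimately have "gam k * (Mk (Suc k) \<omega> - Mk k \<omega>) * exp (g (Mk (Suc k) \<omega>))
        \<le> gam k * (Mk (Suc k) \<omega> - Mk k \<omega>) * exp (g (Mk K \<omega>))"
      by (rule mult_left_mono)
    then show ?thesis using D_le[of k \<omega>] by (simp add: mult_ac)
  qed
  have "gam k = (\<integral>\<omega>. D k \<omega> \<partial>M)" by (simp add: D_integral)
  also have "\<dots> \<le> (\<integral>\<omega>. gam k * ((Mk (Suc k) \<omega> - Mk k \<omega>) * exp (g (Mk K \<omega>))) \<partial>M)"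
    by (intro integral_mono D_int pt integrable_mult_right diff_int) auto
  also have "\<dots> = gam k * (\<integral>\<omega>. (Mk (Suc k) \<omega> - Mk k \<omega>) * exp (g (Mk K \<omega>)) \<partial>M)"
    using diff_int[of k "Suc k" K] by simp
  finally show ?thesis using gam_pos[of k] by simp
qed

lemma W_low: "real K \<le> (\<integral>\<omega>. Mk K \<omega> * exp (g (Mk K \<omega>)) \<partial>M)"
proof -
  have "real K = (\<Sum>k<K. (1::real))" by simp
  also have "\<dots> \<le> (\<Sum>k<K. (\<integral>\<omega>. (Mk (Suc k) \<omega> - Mk k \<omega>) * exp (g (Mk K \<omega>)) \<partial>M))"
    by (intro sum_mono one_le) simp
  also have "\<dots> = (\<integral>\<omega>. (\<Sum>k<K. (Mk (Suc k) \<omega> - Mk k \<omega>) * exp (g (Mk K \<omega>))) \<partial>M)"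
    by (rule Bochner_Integration.integral_sum[symmetric]) (auto intro: diff_int)
  also have "\<dots> = (\<integral>\<omega>. Mk K \<omega> * exp (g (Mk K \<omega>)) \<partial>M)"
  proof (rule Bochner_Integration.integral_cong[OF refl])
    fix \<omega>
    have "(\<Sum>k<K. (Mk (Suc k) \<omega> - Mk k \<omega>) * exp (g (Mk K \<omega>)))
        = (\<Sum>k<K. Mk (Suc k) \<omega> - Mk k \<omega>) * exp (g (Mk K \<omega>))"
      by (simp add: sum_distrib_right)
    also have "\<dots> = Mk K \<omega> * exp (g (Mk K \<omega>))"
      using sum_lessThan_telescope[of "\<lambda>k. Mk k \<omega>" K] by (simp add: Mk0)
    finally show "(\<Sum>k<K. (Mk (Suc k) \<omega> - Mk k \<omega>) * exp (g (Mk K \<omega>))) = Mk K \<omega> * exp (g (Mk K \<omega>))" .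
  qed
  finally show ?thesis .
qed

lemma W_int: "integrable M (\<lambda>\<omega>. Mk K \<omega> * exp (g (Mk K \<omega>)))"
  using diff_int[of 0 K K] by (simp add: Mk0)

lemma S_unb: "\<exists>K. x \<le> S K"
proof (rule ccontr)
  assume "\<not> ?thesis"
  then have lt: "S K \<le> x" for K by (meson linorder_not_le less_imp_le)
  have "real K \<le> x * exp (g x)" for K
  proof -
    have "real K \<le> (\<integral>\<omega>. Mk K \<omega> * exp (g (Mk K \<omega>)) \<partial>M)" by (rule W_low)
    also have "\<dots> \<le> (\<integral>\<omega>. x * exp (g x) \<partial>M)"
    proof (rule integral_mono[OF W_int])
      fix \<omega>
      have m: "Mk K \<omega> \<le> x" using Mk_le_S[of K \<omega>] lt[of K] by linarith
      have "exp (g (Mk K \<omega>)) \<le> exp (g x)" using g_monoD[OF m] by simp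
      then show "Mk K \<omega> * exp (g (Mk K \<omega>)) \<le> x * exp (g x)"
        using m Mk_nonneg[of K \<omega>] by (intro mult_mono) auto
    qed simp
    also have "\<dots> = x * exp (g x)" by (simp add: prob_space)
    finally show ?thesis .
  qed
  moreover obtain n :: nat where "x * exp (g x) < real n" using reals_Archimedean2 by blast
  ultimately show False by (meson linorder_not_le)
qed

lemma E1: "(\<integral>\<^sup>+\<omega>. ennreal (exp (g (Z \<omega>))) \<partial>M) \<le> ennreal (1 + \<delta>)"
proof -
  have sup: "ennreal (exp (g (Z \<omega>))) = (SUP K. ennreal (exp (g (Mk K \<omega>))))" for \<omega>
  proof (rule antisym)
    obtain K where K: "Z \<omega> \<le> S K" using S_unb by blast
    then have "Mk K \<omega> = Z \<omega>" by (simp add: Mk_def)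
    then show "ennreal (exp (g (Z \<omega>))) \<le> (SUP K. ennreal (exp (g (Mk K \<omega>))))"
      by (intro SUP_upper2[of K]) auto
    show "(SUP K. ennreal (exp (g (Mk K \<omega>)))) \<le> ennreal (exp (g (Z \<omega>)))"
      by (intro SUP_least ennreal_leI) (simp add: g_monoD[OF Mk_le_Z])
  qed
  have "(\<integral>\<^sup>+\<omega>. ennreal (exp (g (Z \<omega>))) \<partial>M) = (\<integral>\<^sup>+\<omega>. (SUP K. ennreal (exp (g (Mk K \<omega>)))) \<partial>M)"
    by (simp add: sup)
  also have "\<dots> = (SUP K. (\<integral>\<^sup>+\<omega>. ennreal (exp (g (Mk K \<omega>))) \<partial>M))"
    by (rule nn_integral_monotone_convergence_SUP)
       (auto simp: incseq_def le_fun_def intro!: ennreal_leI g_monoD Mk_mono)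
  also have "\<dots> = (SUP K. ennreal (1 + (\<Sum>k<K. gam k)))"
    by (intro SUP_cong refl) (simp add: nn_integral_eq_integral expg_int exp_integral[symmetric])
  also have "\<dots> \<le> ennreal (1 + \<delta>)"
    using dpos by (intro SUP_least ennreal_leI) (simp add: gam_sum)
  finally show ?thesis .
qed

lemma E2: "(\<integral>\<^sup>+\<omega>. ennreal (Z \<omega> * exp (g (Z \<omega>))) \<partial>M) = \<infinity>"
proof -
  have "of_nat K \<le> (\<integral>\<^sup>+\<omega>. ennreal (Z \<omega> * exp (g (Z \<omega>))) \<partial>M)" for K
  proof -
    have "(of_nat K :: ennreal) = ennreal (real K)" by (simp add: ennreal_of_nat_eq_real_of_nat)
    also have "\<dots> \<le> ennreal (\<integral>\<omega>. Mk K \<omega> * exp (g (Mk K \<omega>)) \<partial>M)"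
      by (rule ennreal_leI) (rule W_low)
    also have "\<dots> = (\<integral>\<^sup>+\<omega>. ennreal (Mk K \<omega> * exp (g (Mk K \<omega>))) \<partial>M)"
      by (rule nn_integral_eq_integral[symmetric]) (auto intro!: W_int simp: Mk_nonneg)
    also have "\<dots> \<le> (\<integral>\<^sup>+\<omega>. ennreal (Z \<omega> * exp (g (Z \<omega>))) \<partial>M)"
    proof (rule nn_integral_mono, rule ennreal_leI)
      fix \<omega>
      have "exp (g (Mk K \<omega>)) \<le> exp (g (Z \<omega>))" using g_monoD[OF Mk_le_Z] by simp
      then show "Mk K \<omega> * exp (g (Mk K \<omega>)) \<le> Z \<omega> * exp (g (Z \<omega>))"
        using Mk_le_Z[of K \<omega>] Mk_nonneg[of K \<omega>] by (intro mult_mono) auto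
    qed
    finally show ?thesis .
  qed
  then have "(SUP K. of_nat K :: ennreal) \<le> (\<integral>\<^sup>+\<omega>. ennreal (Z \<omega> * exp (g (Z \<omega>))) \<partial>M)"
    by (rule SUP_least)
  then show ?thesis by (simp add: ennreal_SUP_of_nat_eq_top top_unique)
qed

end


theorem lemma1:
  fixes M :: "'a measure" and \<xi> :: "'a \<Rightarrow> real" and \<delta> :: real
  assumes "prob_space M"
    and "\<delta> > 0" and "\<delta> \<le> 1"
    and "\<xi> \<in> borel_measurable M"
    and "AE \<omega> in M. \<xi> \<omega> \<ge> 0"
    and "heavy_tailed (distr M borel \<xi>)"
  shows "\<exists>h :: real \<Rightarrow> real.
           h \<in> borel_measurable borel
         \<and> (\<forall>x\<ge>0. h x \<ge> 0)
         \<and> (\<forall>x y. 0 \<le> y \<and> y \<le> x \<longrightarrow> h x \<le> h y + h (x - y))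
         \<and> h \<in> o[at_top](\<lambda>x. x)
         \<and> (\<integral>\<^sup>+ \<omega>. ennreal (exp (h (\<xi> \<omega>))) \<partial>M) \<le> ennreal (1 + \<delta>)
         \<and> (\<integral>\<^sup>+ \<omega>. ennreal (\<xi> \<omega> * exp (h (\<xi> \<omega>))) \<partial>M) = \<infinity>"
proof -
  interpret P: prob_space M by (rule assms(1))
  define Z where "Z \<omega> = max 0 (\<xi> \<omega>)" for \<omega>
  have xm[measurable]: "\<xi> \<in> borel_measurable M" by (rule assms(4))
  have Zm: "Z \<in> borel_measurable M" unfolding Z_def by measurable
  have AEZ: "AE \<omega> in M. \<xi> \<omega> = Z \<omega>"
    using assms(5) by eventually_elim (simp add: Z_def)
  have HT: "(\<integral>\<^sup>+\<omega>. ennreal (exp (\<gamma> * Z \<omega>)) \<partial>M) = \<infinity>" if g: "\<gamma> > 0" for \<gamma>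
  proof -
    have "\<infinity> = (\<integral>\<^sup>+x. ennreal (exp (\<gamma> * x)) \<partial>(distr M borel \<xi>))"
      using assms(6) g unfolding heavy_tailed_def by simp
    also have "\<dots> = (\<integral>\<^sup>+\<omega>. ennreal (exp (\<gamma> * \<xi> \<omega>)) \<partial>M)"
      by (rule nn_integral_distr) auto
    also have "\<dots> = (\<integral>\<^sup>+\<omega>. ennreal (exp (\<gamma> * Z \<omega>)) \<partial>M)"
      by (rule nn_integral_cong_AE) (use AEZ in eventually_elim, simp)
    finally show ?thesis by simp
  qed
  interpret H: htail_d M Z \<delta>
    by unfold_locales (use Zm HT assms(2) in \<open>auto simp: Z_def\<close>)
  have E1: "(\<integral>\<^sup>+ \<omega>. ennreal (exp (H.g (\<xi> \<omega>))) \<partial>M) \<le> ennreal (1 + \<delta>)"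
  proof -
    have "(\<integral>\<^sup>+ \<omega>. ennreal (exp (H.g (\<xi> \<omega>))) \<partial>M) = (\<integral>\<^sup>+ \<omega>. ennreal (exp (H.g (Z \<omega>))) \<partial>M)"
      by (rule nn_integral_cong_AE) (use AEZ in eventually_elim, simp)
    then show ?thesis using H.E1 by simp
  qed
  have E2: "(\<integral>\<^sup>+ \<omega>. ennreal (\<xi> \<omega> * exp (H.g (\<xi> \<omega>))) \<partial>M) = \<infinity>"
  proof -
    have "(\<integral>\<^sup>+ \<omega>. ennreal (\<xi> \<omega> * exp (H.g (\<xi> \<omega>))) \<partial>M) = (\<integral>\<^sup>+ \<omega>. ennreal (Z \<omega> * exp (H.g (Z \<omega>))) \<partial>M)"
      by (rule nn_integral_cong_AE) (use AEZ in eventually_elim, simp)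
    then show ?thesis using H.E2 by simp
  qed
  show ?thesis
    using H.g_meas H.g_nonneg H.g_sub H.g_o E1 E2 by blast
qed

end
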